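(* Let $X$ and $\varepsilon$ be independent real random variables and $Y=X+\varepsilon$. Suppose $P(X\in\{\xi_\ell\}_{\ell\in\mathbb{N}_0})=1$ for real numbers $\xi_0<\xi_1<\cdots$, $F_X\{\xi_0\}>0$, and there is $z_0\in\mathbb{R}$ with $F_\varepsilon(z_0)=0$. Choose $\{\zeta_\ell\}_{\ell\in\mathbb{N}_0}\subset\mathbb{R}$ with $\xi_\ell<\zeta_\ell\le\xi_{\ell+1}$ and $F_\varepsilon(z_0+\zeta_\ell-\xi_\ell)>0$ for each $\ell\in\mathbb{N}_0$. Define $p_X(\ell):=F_X\{\xi_\ell\}\mathbf 1_{\mathbb{N}_0}(\ell)$, $$\ddot P_{\varepsilon,+}(\ell,z):=\Big(\delta_{z,0}-\frac{F_\varepsilon(z_0+\zeta_\ell-\xi_{\ell-z})}{F_\varepsilon(z_0+\zeta_\ell-\xi_\ell)}\mathbf 1_{\{0,\dots,\ell\}}(z)\Big)\mathbf 1_{\mathbb{N}_0}(\ell),\qquad \ddot P_Y(\ell):=\frac{F_Y(z_0+\zeta_\ell)}{F_\varepsilon(z_0+\zeta_\ell-\xi_\ell)}\mathbf 1_{\mathbb{N}_0}(\ell).$$ Then $p_X(\ell)=\sum_{z\in\mathbb{Z}}\ddot P_Y(\ell-z)\,\beta\{\ddot P_{\varepsilon,+}\}(\ell,z)$ for all $\ell\in\mathbb{Z}$. In particular, if there exist $s>0$ and $0<\sigma\le s$ with $\xi_\ell=\xi_0+s\ell$ for all $\ell\in\mathbb{N}_0$ and $F_\varepsilon(z_0+\sigma)>0$,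 then, taking $\zeta_\ell:=\xi_0+\sigma+s\ell$ and $\ddot U_{\varepsilon,+}(z):=\ddot P_{\varepsilon,+}(z,z)$, $$F_X(\xi)=(\Theta\{\ddot P_Y\}*\Theta\{\gamma\{\ddot U_{\varepsilon,+}\}\})\Big(\frac{\xi-\xi_0}{s}\Big)\qquad(\xi\in\mathbb{R}).$$
   Context: $F_B$ is the distribution function of $B$, $F_B\{x\}:=P(B=x)$. $\delta_{z,0}=1$ if $z=0$, else $0$. For a double sequence $\ddot p(\ell,z)$ vanishing for $z<0$: $\ddot p^{*0}(\ell,z):=\delta_{z,0}$, $\ddot p^{*j}(\ell,z):=\sum_{z_1\in\mathbb{Z}}\ddot p(\ell,z_1)\ddot p^{*(j-1)}(\ell-z_1,z-z_1)$, and $\beta\{\ddot p\}(\ell,z):=\sum_{j=0}^{z}\ddot p^{*j}(\ell,z)$ (empty sum $=0$). For a single sequence $\ddot u$ vanishing on negative integers: $\ddot u^{*0}(z):=\delta_{z,0}$, $\ddot u^{*j}(z):=\sum_y\ddot u(z-y)\ddot u^{*(j-1)}(y)$, $\gamma\{\ddot u\}(z):=\sum_{j=0}^z\ddot u^{*j}(z)$. For a sequence $p$ vanishing on negative integers, $\Theta\{p\}(\xi):=\sum_{z=-\infty}^{\lfloor\xi\rfloor}p(z)$, and $(\Theta\{p\}*\Theta\{q\})(x):=\sum_{z\in\mathbb{Z}}\Theta\{p\}(x-z)q(z)$. *)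

theory Defs
  imports "HOL-Probability.Probability"
begin

definition distfun :: "'a measure \<Rightarrow> ('a \<Rightarrow> real) \<Rightarrow> real \<Rightarrow> real" where
  "distfun M B x = cdf (distr M borel B) x"

definition distatom :: "'a measure \<Rightarrow> ('a \<Rightarrow> real) \<Rightarrow> real \<Rightarrow> real" where
  "distatom M B x = measure (distr M borel B) {x}"

definition kdelta :: "int \<Rightarrow> real" where
  "kdelta z = (if z = 0 then 1 else 0)"

fun dconv_pow :: "(int \<Rightarrow> int \<Rightarrow> real) \<Rightarrow> nat \<Rightarrow> int \<Rightarrow> int \<Rightarrow> real" where
  "dconv_pow p 0 l z = kdelta z"
| "dconv_pow p (Suc j) l z =
     (\<Sum>\<^sub>\<infinity> z1 \<in> (UNIV::int set). p l z1 * dconv_pow p j (l - z1) (z - z1))"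

definition dbeta :: "(int \<Rightarrow> int \<Rightarrow> real) \<Rightarrow> int \<Rightarrow> int \<Rightarrow> real" where
  "dbeta p l z = (\<Sum>j\<in>{0..z}. dconv_pow p (nat j) l z)"

fun sconv_pow :: "(int \<Rightarrow> real) \<Rightarrow> nat \<Rightarrow> int \<Rightarrow> real" where
  "sconv_pow u 0 z = kdelta z"
| "sconv_pow u (Suc j) z = (\<Sum>\<^sub>\<infinity> y \<in> (UNIV::int set). u (z - y) * sconv_pow u j y)"

definition sgamma :: "(int \<Rightarrow> real) \<Rightarrow> int \<Rightarrow> real" where
  "sgamma u z = (\<Sum>j\<in>{0..z}. sconv_pow u (nat j) z)"

definition Theta :: "(int \<Rightarrow> real) \<Rightarrow> real \<Rightarrow> real" where
  "Theta p x = (\<Sum>\<^sub>\<infinity> z \<in> {..\<lfloor>x\<rfloor>}. p z)"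

definition Theta_conv :: "(int \<Rightarrow> real) \<Rightarrow> (int \<Rightarrow> real) \<Rightarrow> real \<Rightarrow> real" where
  "Theta_conv p q x = (\<Sum>\<^sub>\<infinity> z \<in> (UNIV::int set). Theta p (x - of_int z) * q z)"

definition Peps_plus :: "(real \<Rightarrow> real) \<Rightarrow> (nat \<Rightarrow> real) \<Rightarrow> (nat \<Rightarrow> real) \<Rightarrow> real \<Rightarrow> int \<Rightarrow> int \<Rightarrow> real" where
  "Peps_plus Fe \<xi> \<zeta> z0 l z =
     (if 0 \<le> l then
        kdelta z - (if 0 \<le> z \<and> z \<le> l then
           Fe (z0 + \<zeta> (nat l) - \<xi> (nat (l - z))) / Fe (z0 + \<zeta> (nat l) - \<xi> (nat l)) else 0)
      else 0)"

definition PY :: "(real \<Rightarrow> real) \<Rightarrow> (real \<Rightarrow> real) \<Rightarrow> (nat \<Rightarrow> real) \<Rightarrow> (nat \<Rightarrow> real) \<Rightarrow> real \<Rightarrow> int \<Rightarrow> real" where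
  "PY FY Fe \<xi> \<zeta> z0 l =
     (if 0 \<le> l then FY (z0 + \<zeta> (nat l)) / Fe (z0 + \<zeta> (nat l) - \<xi> (nat l)) else 0)"

end

theory Submission
  imports Defs
begin


lemma (in prob_space) indep_prob:
  fixes X E :: "'a \<Rightarrow> real"
  assumes "indep_var borel X borel E" "A \<in> sets borel" "B \<in> sets borel"
  shows "prob {w\<in>space M. X w \<in> A \<and> E w \<in> B} = prob {w\<in>space M. X w \<in> A} * prob {w\<in>space M. E w \<in> B}"
proof -
  have i: "indep_set (sigma_sets (space M) { X -` A \<inter> space M | A. A \<in> sets borel})
      (sigma_sets (space M) { E -` A \<inter> space M | A. A \<in> sets borel})"
    using assms(1) indep_var_eq by blast
  have a: "X -` A \<inter> space M \<in> sigma_sets (space M) { X -` A \<inter> space M | A. A \<in> sets borel}"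
    using assms(2) by (intro sigma_sets.Basic) blast
  have b: "E -` B \<inter> space M \<in> sigma_sets (space M) { E -` A \<inter> space M | A. A \<in> sets borel}"
    using assms(3) by (intro sigma_sets.Basic) blast
  have "prob ((X -` A \<inter> space M) \<inter> (E -` B \<inter> space M)) = prob (X -` A \<inter> space M) * prob (E -` B \<inter> space M)"
    using i a b indep_sets2_eq by blast
  moreover have "{w\<in>space M. X w \<in> A \<and> E w \<in> B} = (X -` A \<inter> space M) \<inter> (E -` B \<inter> space M)" by auto
  moreover have "{w\<in>space M. X w \<in> A} = X -` A \<inter> space M" by auto
  moreover have "{w\<in>space M. E w \<in> B} = E -` B \<inter> space M" by auto
  ultimately show ?thesis by simp
qed

lemma distfun_eq: "B \<in> borel_measurable M \<Longrightarrow> distfun M B x = measure M {w\<in>space M. B w \<le> x}"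
  unfolding distfun_def cdf_def
  by (subst measure_distr) (auto intro!: arg_cong[where f="measure M"])

lemma distatom_eq: "B \<in> borel_measurable M \<Longrightarrow> distatom M B x = measure M {w\<in>space M. B w = x}"
  unfolding distatom_def
  by (subst measure_distr) (auto intro!: arg_cong[where f="measure M"])

lemma (in prob_space) FY_decomp:
  fixes X E :: "'a \<Rightarrow> real" and \<xi> :: "nat \<Rightarrow> real"
  assumes Xm: "X \<in> borel_measurable M" and Em: "E \<in> borel_measurable M"
    and ind: "indep_var borel X borel E" and mono: "strict_mono \<xi>"
    and rng: "prob {w\<in>space M. X w \<in> range \<xi>} = 1"
    and z0: "prob {w\<in>space M. E w \<le> z0} = 0"
    and t: "t - \<xi> (Suc L) \<le> z0"
  shows "prob {w\<in>space M. X w + E w \<le> t} =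
     (\<Sum>k\<le>L. prob {w\<in>space M. X w = \<xi> k} * prob {w\<in>space M. E w \<le> t - \<xi> k})"
proof -
  define C where "C k = {w\<in>space M. X w = \<xi> k \<and> E w \<le> t - \<xi> k}" for k
  define U where "U = (\<Union>k\<in>{..L}. C k)"
  define N1 where "N1 = space M - {w\<in>space M. X w \<in> range \<xi>}"
  define N2 where "N2 = {w\<in>space M. E w \<le> z0}"
  define A where "A = {w\<in>space M. X w + E w \<le> t}"
  have Cev: "C k \<in> events" for k
  proof -
    have "C k = {w\<in>space M. X w \<in> {\<xi> k}} \<inter> {w\<in>space M. E w \<in> {..t - \<xi> k}}"
      unfolding C_def by auto
    also have "\<dots> \<in> events" 
      by (intro sets.Int measurable_sets_Collect[OF Xm] measurable_sets_Collect[OF Em])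
         (auto simp: atMost_def[symmetric])
    finally show ?thesis .
  qed
  have Uev: "U \<in> events" unfolding U_def using Cev by auto
  have Aev: "A \<in> events" unfolding A_def using Xm Em by measurable
  have N2ev: "N2 \<in> events" unfolding N2_def using Em by measurable
  have Rev: "{w\<in>space M. X w \<in> range \<xi>} \<in> events"
    using rng measure_notin_sets by fastforce
  have N1ev: "N1 \<in> events" unfolding N1_def using Rev by auto
  have pN1: "prob N1 = 0" unfolding N1_def using prob_compl[OF Rev] rng by simp
  have pN2: "prob N2 = 0" using z0 N2_def by simp
  have sub: "A \<subseteq> U \<union> N1 \<union> N2"
  proof
    fix w assume w: "w \<in> A"
    show "w \<in> U \<union> N1 \<union> N2"
    proof (cases "X w \<in> range \<xi>")
      case False then show ?thesis using w unfolding A_def N1_def by auto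
    next
      case True
      then obtain k where k: "X w = \<xi> k" by auto
      show ?thesis
      proof (cases "k \<le> L")
        case True then show ?thesis using w k unfolding A_def U_def C_def by auto
      next
        case False
        then have "\<xi> (Suc L) \<le> \<xi> k" using mono by (simp add: strict_mono_less_eq)
        then show ?thesis using w k t unfolding A_def N2_def by auto
      qed
    qed
  qed
  have sub2: "U \<subseteq> A" unfolding U_def C_def A_def by auto
  have "prob A \<le> prob (U \<union> N1 \<union> N2)" using sub Uev N1ev N2ev by (intro finite_measure_mono) auto
  also have "\<dots> \<le> prob U + prob N1 + prob N2"
    using measure_Un_le[of "U \<union> N1" M N2] measure_Un_le[of U M N1] Uev N1ev N2ev by auto
  finally have "prob A \<le> prob U" using pN1 pN2 by simp
  moreover have "prob U \<le> prob A" using sub2 Aev by (intro finite_measure_mono) auto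
  ultimately have "prob A = prob U" by simp
  also have "prob U = (\<Sum>k\<le>L. prob (C k))" unfolding U_def
    by (intro measure_finite_Union) (use Cev in \<open>auto simp: disjoint_family_on_def C_def strict_mono_eq[OF mono]\<close>)
  also have "\<dots> = (\<Sum>k\<le>L. prob {w\<in>space M. X w = \<xi> k} * prob {w\<in>space M. E w \<le> t - \<xi> k})"
  proof (rule sum.cong)
    fix k
    have "prob (C k) = prob {w\<in>space M. X w \<in> {\<xi> k} \<and> E w \<in> {..t - \<xi> k}}"
      unfolding C_def by simp
    also have "\<dots> = prob {w\<in>space M. X w \<in> {\<xi> k}} * prob {w\<in>space M. E w \<in> {..t - \<xi> k}}"
      by (rule indep_prob[OF ind]) auto
    finally show "prob (C k) = prob {w\<in>space M. X w = \<xi> k} * prob {w\<in>space M. E w \<le> t - \<xi> k}" by simp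
  qed simp
  finally show ?thesis unfolding A_def .
qed


lemma (in prob_space) FX_decomp:
  fixes X :: "'a \<Rightarrow> real" and \<xi> :: "nat \<Rightarrow> real"
  assumes Xm: "X \<in> borel_measurable M"
    and rng: "prob {w\<in>space M. X w \<in> range \<xi>} = 1"
    and K: "finite K" "\<And>k. \<xi> k \<le> x \<longleftrightarrow> k \<in> K"
    and mono: "strict_mono \<xi>"
  shows "prob {w\<in>space M. X w \<le> x} = (\<Sum>k\<in>K. prob {w\<in>space M. X w = \<xi> k})"
proof -
  define C where "C k = {w\<in>space M. X w = \<xi> k}" for k
  define U where "U = (\<Union>k\<in>K. C k)"
  define N1 where "N1 = space M - {w\<in>space M. X w \<in> range \<xi>}"
  define A where "A = {w\<in>space M. X w \<le> x}"
  have Cev: "C k \<in> events" for k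
  proof -
    have "C k = {w\<in>space M. X w \<in> {\<xi> k}}" unfolding C_def by auto
    also have "\<dots> \<in> events"
      by (intro measurable_sets_Collect[OF Xm]) auto
    finally show ?thesis .
  qed
  have Uev: "U \<in> events" unfolding U_def using Cev K by auto
  have Aev: "A \<in> events" unfolding A_def using Xm by measurable
  have Rev: "{w\<in>space M. X w \<in> range \<xi>} \<in> events"
    using rng measure_notin_sets by fastforce
  have N1ev: "N1 \<in> events" unfolding N1_def using Rev by auto
  have pN1: "prob N1 = 0" unfolding N1_def using prob_compl[OF Rev] rng by simp
  have sub: "A \<subseteq> U \<union> N1"
    unfolding A_def U_def N1_def C_def using K by auto
  have sub2: "U \<subseteq> A" unfolding U_def C_def A_def using K by auto
  have "prob A \<le> prob (U \<union> N1)" using sub Uev N1ev by (intro finite_measure_mono) auto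
  also have "\<dots> \<le> prob U + prob N1"
    using measure_Un_le[of U M N1] Uev N1ev by auto
  finally have "prob A \<le> prob U" using pN1 by simp
  moreover have "prob U \<le> prob A" using sub2 Aev by (intro finite_measure_mono) auto
  ultimately have "prob A = prob U" by simp
  also have "prob U = (\<Sum>k\<in>K. prob (C k))" unfolding U_def
    by (intro measure_finite_Union) (use Cev K in \<open>auto simp: disjoint_family_on_def C_def strict_mono_eq[OF mono]\<close>)
  finally show ?thesis unfolding A_def C_def .
qed



lemma infsum_supp:
  fixes f :: "'a \<Rightarrow> real"
  assumes "finite S" "\<And>x. x \<notin> S \<Longrightarrow> f x = 0"
  shows "infsum f UNIV = sum f S"
proof -
  have "infsum f UNIV = infsum f S" by (rule infsum_cong_neutral) (use assms in auto)
  then show ?thesis using assms by simp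
qed

lemma sum_shift_int:
  fixes f :: "int \<Rightarrow> real"
  shows "(\<Sum>z\<in>{a..b}. f (z - c)) = (\<Sum>w\<in>{a-c..b-c}. f w)"
  by (rule sum.reindex_bij_witness[of _ "\<lambda>w. w + c" "\<lambda>z. z - c"]) auto

locale suppP =
  fixes P :: "int \<Rightarrow> int \<Rightarrow> real"
  assumes supp: "\<And>l z. P l z \<noteq> 0 \<Longrightarrow> 1 \<le> z \<and> z \<le> l"
begin

lemma D_Suc: "dconv_pow P (Suc j) l z = (\<Sum>z1\<in>{1..l}. P l z1 * dconv_pow P j (l - z1) (z - z1))"
  by (simp, rule infsum_supp) (use supp in auto)

lemma D_zero: "z < int j \<Longrightarrow> dconv_pow P j l z = 0"
proof (induction j arbitrary: l z)
  case 0 then show ?case by (simp add: kdelta_def)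
next
  case (Suc j)
  show ?case unfolding D_Suc
  proof (rule sum.neutral, rule ballI)
    fix z1 assume "z1 \<in> {1..l}"
    then have "z - z1 < int j" using Suc.prems by auto
    then show "P l z1 * dconv_pow P j (l - z1) (z - z1) = 0" using Suc.IH by simp
  qed
qed

lemma beta_eq:
  assumes "z < int N"
  shows "dbeta P l z = (\<Sum>j<N. dconv_pow P j l z)"
proof (cases "z < 0")
  case True
  then show ?thesis unfolding dbeta_def by (auto intro!: sum.neutral D_zero)
next
  case False
  have "{0..z} = int ` {..nat z}" using False
    by (auto simp: image_iff intro!: bexI[where x="nat _"])
  then have "dbeta P l z = (\<Sum>j\<in>{..nat z}. dconv_pow P j l z)"
    unfolding dbeta_def by (simp add: sum.reindex)
  also have "\<dots> = (\<Sum>j<N. dconv_pow P j l z)"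
    by (rule sum.mono_neutral_left) (use assms False in \<open>auto intro!: D_zero\<close>)
  finally show ?thesis .
qed

lemma beta_rec:
  "dbeta P l z = kdelta z + (\<Sum>z1\<in>{1..l}. P l z1 * dbeta P (l - z1) (z - z1))"
proof -
  define N where "N = nat z + 1"
  have zN: "z < int N" unfolding N_def by linarith
  have "dbeta P l z = (\<Sum>j<Suc N. dconv_pow P j l z)"
    by (rule beta_eq) (use zN in auto)
  also have "\<dots> = kdelta z + (\<Sum>j<N. dconv_pow P (Suc j) l z)"
    by (simp only: sum.lessThan_Suc_shift dconv_pow.simps(1))
  also have "(\<Sum>j<N. dconv_pow P (Suc j) l z) =
      (\<Sum>j<N. \<Sum>z1\<in>{1..l}. P l z1 * dconv_pow P j (l - z1) (z - z1))"
    by (simp only: D_Suc)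
  also have "\<dots> = (\<Sum>z1\<in>{1..l}. P l z1 * (\<Sum>j<N. dconv_pow P j (l - z1) (z - z1)))"
    by (simp add: sum.swap[of _ "{..<N}"] sum_distrib_left)
  also have "\<dots> = (\<Sum>z1\<in>{1..l}. P l z1 * dbeta P (l - z1) (z - z1))"
  proof (rule sum.cong)
    fix z1 assume "z1 \<in> {1..l}"
    then have "z - z1 < int N" using zN by auto
    then show "P l z1 * (\<Sum>j<N. dconv_pow P j (l - z1) (z - z1)) = P l z1 * dbeta P (l - z1) (z - z1)"
      using beta_eq by simp
  qed simp
  finally show ?thesis .
qed

lemma beta_neg: "z < 0 \<Longrightarrow> dbeta P l z = 0"
  unfolding dbeta_def by simp

lemma main_rec:
  fixes q g :: "int \<Rightarrow> real"
  assumes q0: "\<And>l. l < 0 \<Longrightarrow> q l = 0" and g0: "\<And>l. l < 0 \<Longrightarrow> g l = 0"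
    and rec: "\<And>l. 0 \<le> l \<Longrightarrow> q l = g l + (\<Sum>z1\<in>{1..l}. P l z1 * q (l - z1))"
  shows "q l = (\<Sum>z\<in>{0..l}. g (l - z) * dbeta P l z)"
proof (induction l rule: measure_induct_rule[where f="\<lambda>l. nat (l + 1)"])
  case (less l)
  show ?case
  proof (cases "l < 0")
    case True then show ?thesis using q0 by simp
  next
    case False
    have "(\<Sum>z\<in>{0..l}. g (l - z) * dbeta P l z) =
      (\<Sum>z\<in>{0..l}. g (l - z) * kdelta z) +
      (\<Sum>z\<in>{0..l}. \<Sum>z1\<in>{1..l}. g (l - z) * (P l z1 * dbeta P (l - z1) (z - z1)))"
    proof -
      have "(\<Sum>z\<in>{0..l}. g (l - z) * dbeta P l z) = (\<Sum>z\<in>{0..l}. g (l - z) *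
         (kdelta z + (\<Sum>z1\<in>{1..l}. P l z1 * dbeta P (l - z1) (z - z1))))"
        by (rule sum.cong[OF refl], subst beta_rec, rule refl)
      then show ?thesis by (simp add: distrib_left sum.distrib sum_distrib_left)
    qed
    also have "(\<Sum>z\<in>{0..l}. g (l - z) * kdelta z) = g l"
    proof -
      have "(\<Sum>z\<in>{0..l}. g (l - z) * kdelta z) = (\<Sum>z\<in>{0..l}. if z = 0 then g l else 0)"
        by (rule sum.cong) (auto simp: kdelta_def)
      then show ?thesis using False by simp
    qed
    also have "(\<Sum>z\<in>{0..l}. \<Sum>z1\<in>{1..l}. g (l - z) * (P l z1 * dbeta P (l - z1) (z - z1))) =
       (\<Sum>z1\<in>{1..l}. P l z1 * (\<Sum>z\<in>{0..l}. g (l - z) * dbeta P (l - z1) (z - z1)))"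
      by (subst sum.swap) (simp add: sum_distrib_left mult_ac)
    also have "\<dots> = (\<Sum>z1\<in>{1..l}. P l z1 * q (l - z1))"
    proof (rule sum.cong)
      fix z1 assume z1: "z1 \<in> {1..l}"
      have "(\<Sum>z\<in>{0..l}. g (l - z) * dbeta P (l - z1) (z - z1)) =
            (\<Sum>z\<in>{0..l}. (\<lambda>w. g (l - z1 - w) * dbeta P (l - z1) w) (z - z1))"
        by (simp add: algebra_simps)
      also have "\<dots> = (\<Sum>w\<in>{0-z1..l-z1}. g (l - z1 - w) * dbeta P (l - z1) w)"
        by (rule sum_shift_int)
      also have "\<dots> = (\<Sum>w\<in>{0..l-z1}. g (l - z1 - w) * dbeta P (l - z1) w)"
        by (rule sum.mono_neutral_right) (use z1 in \<open>auto simp: beta_neg\<close>)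
      also have "\<dots> = q (l - z1)"
        by (rule less[symmetric]) (use z1 in auto)
      finally show "P l z1 * (\<Sum>z\<in>{0..l}. g (l - z) * dbeta P (l - z1) (z - z1)) = P l z1 * q (l - z1)"
        by simp
    qed simp
    finally show ?thesis using rec False by simp
  qed
qed

lemma main_infsum:
  fixes q g :: "int \<Rightarrow> real"
  assumes q0: "\<And>l. l < 0 \<Longrightarrow> q l = 0" and g0: "\<And>l. l < 0 \<Longrightarrow> g l = 0"
    and rec: "\<And>l. 0 \<le> l \<Longrightarrow> q l = g l + (\<Sum>z1\<in>{1..l}. P l z1 * q (l - z1))"
  shows "q l = (\<Sum>\<^sub>\<infinity>z\<in>(UNIV::int set). g (l - z) * dbeta P l z)"
proof -
  have "q l = (\<Sum>z\<in>{0..l}. g (l - z) * dbeta P l z)" by (rule main_rec[OF assms])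
  also have "\<dots> = (\<Sum>\<^sub>\<infinity>z\<in>(UNIV::int set). g (l - z) * dbeta P l z)"
    by (rule infsum_supp[symmetric]) (auto simp: beta_neg g0)
  finally show ?thesis .
qed

end


lemma S_zero:
  assumes U0: "\<And>z. z \<le> 0 \<Longrightarrow> U z = 0"
  shows "z < int j \<Longrightarrow> sconv_pow U j z = 0"
proof (induction j arbitrary: z)
  case 0 then show ?case by (simp add: kdelta_def)
next
  case (Suc j)
  have "U (z - y) * sconv_pow U j y = 0" for y
  proof (cases "y < int j")
    case True then show ?thesis using Suc.IH by simp
  next
    case False then have "z - y \<le> 0" using Suc.prems by simp
    then show ?thesis using U0 by simp
  qed
  then have "(\<lambda>y. U (z - y) * sconv_pow U j y) = (\<lambda>_. 0)" by (intro ext)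
  then show ?case by simp
qed

lemma S_Suc:
  assumes U0: "\<And>z. z \<le> 0 \<Longrightarrow> U z = 0"
  shows "sconv_pow U (Suc j) z = (\<Sum>z1\<in>{1..z}. U z1 * sconv_pow U j (z - z1))"
proof -
  have "sconv_pow U (Suc j) z = (\<Sum>y\<in>{0..z-1}. U (z - y) * sconv_pow U j y)"
    by (simp, rule infsum_supp) (auto simp: U0 S_zero[OF U0])
  also have "\<dots> = (\<Sum>z1\<in>{1..z}. U z1 * sconv_pow U j (z - z1))"
    by (rule sum.reindex_bij_witness[of _ "\<lambda>z1. z - z1" "\<lambda>y. z - y"]) auto
  finally show ?thesis .
qed

lemma sgamma_neg: "z < 0 \<Longrightarrow> sgamma U z = 0"
  unfolding sgamma_def by simp

lemma Theta_conv_eq: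
  fixes g c :: "int \<Rightarrow> real"
  assumes g0: "\<And>w. w < 0 \<Longrightarrow> g w = 0" and c0: "\<And>w. w < 0 \<Longrightarrow> c w = 0"
  shows "Theta_conv g c u = (\<Sum>k\<in>{0..\<lfloor>u\<rfloor>}. \<Sum>z\<in>{0..k}. g (k - z) * c z)"
proof -
  define n where "n = \<lfloor>u\<rfloor>"
  have Th: "Theta g v = (\<Sum>w\<in>{0..\<lfloor>v\<rfloor>}. g w)" for v
  proof -
    have "Theta g v = infsum g {0..\<lfloor>v\<rfloor>}" unfolding Theta_def
      by (rule infsum_cong_neutral) (auto simp: g0)
    then show ?thesis by simp
  qed
  have "Theta_conv g c u = (\<Sum>z\<in>{0..n}. (\<Sum>w\<in>{0..n - z}. g w) * c z)"
    unfolding Theta_conv_def Th n_def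
    by (simp only: floor_diff_of_int, rule infsum_supp) (auto simp: c0)
  also have "\<dots> = (\<Sum>z\<in>{0..n}. \<Sum>k\<in>{0..n}. g (k - z) * c z)"
  proof (rule sum.cong[OF refl])
    fix z assume z: "z \<in> {0..n}"
    have "(\<Sum>k\<in>{0..n}. g (k - z)) = (\<Sum>w\<in>{0-z..n-z}. g w)" by (rule sum_shift_int)
    also have "\<dots> = (\<Sum>w\<in>{0..n-z}. g w)"
      by (rule sum.mono_neutral_right) (use z in \<open>auto simp: g0\<close>)
    finally show "(\<Sum>w\<in>{0..n - z}. g w) * c z = (\<Sum>k\<in>{0..n}. g (k - z) * c z)"
      by (metis sum_distrib_right)
  qed
  also have "\<dots> = (\<Sum>k\<in>{0..n}. \<Sum>z\<in>{0..n}. g (k - z) * c z)"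
    by (rule sum.swap)
  also have "\<dots> = (\<Sum>k\<in>{0..n}. \<Sum>z\<in>{0..k}. g (k - z) * c z)"
    by (rule sum.cong[OF refl], rule sum.mono_neutral_right) (auto simp: g0)
  finally show ?thesis unfolding n_def .
qed

context suppP begin

lemma D_eq_S:
  assumes PU: "\<And>l z. 0 \<le> z \<Longrightarrow> z \<le> l \<Longrightarrow> P l z = U z" and U0: "\<And>z. z \<le> 0 \<Longrightarrow> U z = 0"
  shows "z \<le> l \<Longrightarrow> dconv_pow P j l z = sconv_pow U j z"
proof (induction j arbitrary: l z)
  case 0 then show ?case by simp
next
  case (Suc j)
  have "dconv_pow P (Suc j) l z = (\<Sum>z1\<in>{1..l}. P l z1 * dconv_pow P j (l - z1) (z - z1))"
    by (rule D_Suc)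
  also have "\<dots> = (\<Sum>z1\<in>{1..z}. P l z1 * dconv_pow P j (l - z1) (z - z1))"
    by (rule sum.mono_neutral_right) (use Suc.prems in \<open>auto simp: D_zero\<close>)
  also have "\<dots> = (\<Sum>z1\<in>{1..z}. U z1 * sconv_pow U j (z - z1))"
    by (rule sum.cong[OF refl]) (use Suc.prems Suc.IH PU in auto)
  also have "\<dots> = sconv_pow U (Suc j) z" by (rule S_Suc[OF U0, symmetric])
  finally show ?case .
qed

lemma gamma_eq:
  assumes PU: "\<And>l z. 0 \<le> z \<Longrightarrow> z \<le> l \<Longrightarrow> P l z = U z" and U0: "\<And>z. z \<le> 0 \<Longrightarrow> U z = 0"
  shows "z \<le> l \<Longrightarrow> dbeta P l z = sgamma U z"
  unfolding dbeta_def sgamma_def by (rule sum.cong[OF refl]) (auto intro: D_eq_S[OF PU U0])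

end

theorem corollary3:
  fixes M :: "'a measure" and X \<epsilon> :: "'a \<Rightarrow> real" and \<xi> :: "nat \<Rightarrow> real" and z0 :: real
  assumes "prob_space M"
    and "X \<in> borel_measurable M" and "\<epsilon> \<in> borel_measurable M"
    and "prob_space.indep_var M borel X borel \<epsilon>"
    and "strict_mono \<xi>"
    and "measure M {\<omega> \<in> space M. X \<omega> \<in> range \<xi>} = 1"
    and "distatom M X (\<xi> 0) > 0"
    and "distfun M \<epsilon> z0 = 0"
  shows
   "(\<forall>\<zeta> :: nat \<Rightarrow> real.
       (\<forall>l. \<xi> l < \<zeta> l \<and> \<zeta> l \<le> \<xi> (Suc l) \<and> distfun M \<epsilon> (z0 + \<zeta> l - \<xi> l) > 0) \<longrightarrow>
       (\<forall>l :: int.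
          (if 0 \<le> l then distatom M X (\<xi> (nat l)) else 0) =
          (\<Sum>\<^sub>\<infinity> z \<in> (UNIV::int set).
             PY (distfun M (\<lambda>\<omega>. X \<omega> + \<epsilon> \<omega>)) (distfun M \<epsilon>) \<xi> \<zeta> z0 (l - z) *
             dbeta (Peps_plus (distfun M \<epsilon>) \<xi> \<zeta> z0) l z)))
    \<and>
    (\<forall>s \<sigma> :: real.
       s > 0 \<and> 0 < \<sigma> \<and> \<sigma> \<le> s \<and> (\<forall>l. \<xi> l = \<xi> 0 + s * real l) \<and> distfun M \<epsilon> (z0 + \<sigma>) > 0 \<longrightarrow>
       (let \<zeta> = (\<lambda>l. \<xi> 0 + \<sigma> + s * real l) in
        \<forall>x :: real.
          distfun M X x =
          Theta_conv (PY (distfun M (\<lambda>\<omega>. X \<omega> + \<epsilon> \<omega>)) (distfun M \<epsilon>) \<xi> \<zeta> z0)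
                     (sgamma (\<lambda>z. Peps_plus (distfun M \<epsilon>) \<xi> \<zeta> z0 z z))
                     ((x - \<xi> 0) / s)))"
  proof -
  interpret prob_space M by fact
  note Xm = assms(2) and Em = assms(3) and ind = assms(4) and mono = assms(5) and rng = assms(6)
  have Ym: "(\<lambda>w. X w + \<epsilon> w) \<in> borel_measurable M" using Xm Em by measurable
  define FE where "FE = distfun M \<epsilon>"
  define FY where "FY = distfun M (\<lambda>w. X w + \<epsilon> w)"
  define pX where "pX k = distatom M X (\<xi> k)" for k
  have FE_eq: "FE t = prob {w\<in>space M. \<epsilon> w \<le> t}" for t unfolding FE_def by (rule distfun_eq[OF Em])
  have FY_eq: "FY t = prob {w\<in>space M. X w + \<epsilon> w \<le> t}" for t unfolding FY_def by (rule distfun_eq[OF Ym])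
  have pX_eq: "pX k = prob {w\<in>space M. X w = \<xi> k}" for k unfolding pX_def by (rule distatom_eq[OF Xm])
  have z0: "prob {w\<in>space M. \<epsilon> w \<le> z0} = 0" using assms(8) FE_eq FE_def by simp
  define q where "q l = (if 0 \<le> l then pX (nat l) else 0)" for l :: int
  have key: "suppP (Peps_plus FE \<xi> \<zeta> z0) \<and>
      (\<forall>l. 0 \<le> l \<longrightarrow> q l = PY FY FE \<xi> \<zeta> z0 l +
          (\<Sum>z1\<in>{1..l}. Peps_plus FE \<xi> \<zeta> z0 l z1 * q (l - z1)))"
    if H: "\<forall>l. \<xi> l < \<zeta> l \<and> \<zeta> l \<le> \<xi> (Suc l) \<and> FE (z0 + \<zeta> l - \<xi> l) > 0" for \<zeta>
  proof
    show "suppP (Peps_plus FE \<xi> \<zeta> z0)"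
    proof
      fix l z assume nz: "Peps_plus FE \<xi> \<zeta> z0 l z \<noteq> 0"
      have d: "FE (z0 + \<zeta> (nat l) - \<xi> (nat l)) > 0" using H by blast
      show "1 \<le> z \<and> z \<le> l"
      proof (cases "z = 0")
        case True then show ?thesis using nz d by (auto simp: Peps_plus_def kdelta_def split: if_splits)
      next
        case False then show ?thesis using nz by (auto simp: Peps_plus_def kdelta_def split: if_splits)
      qed
    qed
    show "\<forall>l. 0 \<le> l \<longrightarrow> q l = PY FY FE \<xi> \<zeta> z0 l +
          (\<Sum>z1\<in>{1..l}. Peps_plus FE \<xi> \<zeta> z0 l z1 * q (l - z1))"
    proof (intro allI impI)
      fix l :: int assume l: "0 \<le> l"
      define L where "L = nat l"
      define t where "t = z0 + \<zeta> L"
      define d where "d = FE (t - \<xi> L)"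
      have d0: "d > 0" unfolding d_def t_def using H by simp
      have tS: "t - \<xi> (Suc L) \<le> z0" unfolding t_def using H by simp
      have FYt: "FY t = (\<Sum>k\<le>L. pX k * FE (t - \<xi> k))"
        unfolding FY_eq pX_eq FE_eq by (rule FY_decomp[OF Xm Em ind mono rng z0 tS])
      have "FY t = (\<Sum>k<L. pX k * FE (t - \<xi> k)) + pX L * d"
        unfolding FYt d_def by (simp add: lessThan_Suc_atMost[symmetric])
      then have g: "PY FY FE \<xi> \<zeta> z0 l = (\<Sum>k<L. pX k * FE (t - \<xi> k)) / d + pX L"
        unfolding PY_def using l d0 by (simp add: L_def[symmetric] t_def[symmetric] d_def[symmetric] field_simps)
      have "(\<Sum>z1\<in>{1..l}. Peps_plus FE \<xi> \<zeta> z0 l z1 * q (l - z1)) =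
            (\<Sum>k<L. - (pX k * FE (t - \<xi> k) / d))"
      proof (rule sum.reindex_bij_witness[of _ "\<lambda>k. l - int k" "\<lambda>z1. nat (l - z1)"])
        fix z1 assume z1: "z1 \<in> {1..l}"
        then show "l - int (nat (l - z1)) = z1" by simp
        show "nat (l - z1) \<in> {..<L}" using z1 unfolding L_def by auto
        have "Peps_plus FE \<xi> \<zeta> z0 l z1 = - (FE (t - \<xi> (nat (l - z1))) / d)"
          using z1 l unfolding Peps_plus_def kdelta_def d_def t_def L_def by auto
        moreover have "q (l - z1) = pX (nat (l - z1))" using z1 unfolding q_def by auto
        ultimately show "- (pX (nat (l - z1)) * FE (t - \<xi> (nat (l - z1))) / d) =
            Peps_plus FE \<xi> \<zeta> z0 l z1 * q (l - z1)" by simp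
      next
        fix k assume k: "k \<in> {..<L}"
        then show "nat (l - (l - int k)) = k" by simp
        show "l - int k \<in> {1..l}" using k l unfolding L_def by auto
      qed
      also have "\<dots> = - ((\<Sum>k<L. pX k * FE (t - \<xi> k)) / d)"
        by (simp add: sum_negf sum_divide_distrib)
      finally show "q l = PY FY FE \<xi> \<zeta> z0 l +
          (\<Sum>z1\<in>{1..l}. Peps_plus FE \<xi> \<zeta> z0 l z1 * q (l - z1))"
        using g l unfolding q_def L_def by simp
    qed
  qed
  have g0: "PY FY FE \<xi> \<zeta> z0 l = 0" if "l < 0" for \<zeta> l using that by (simp add: PY_def)
  have q0: "q l = 0" if "l < 0" for l using that by (simp add: q_def)
  have part1: "\<forall>\<zeta> :: nat \<Rightarrow> real.
       (\<forall>l. \<xi> l < \<zeta> l \<and> \<zeta> l \<le> \<xi> (Suc l) \<and> FE (z0 + \<zeta> l - \<xi> l) > 0) \<longrightarrow>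
       (\<forall>l :: int. q l = (\<Sum>\<^sub>\<infinity> z \<in> (UNIV::int set). PY FY FE \<xi> \<zeta> z0 (l - z) *
             dbeta (Peps_plus FE \<xi> \<zeta> z0) l z))"
  proof (intro allI impI)
    fix \<zeta> :: "nat \<Rightarrow> real" and l :: int
    assume H: "\<forall>l. \<xi> l < \<zeta> l \<and> \<zeta> l \<le> \<xi> (Suc l) \<and> FE (z0 + \<zeta> l - \<xi> l) > 0"
    note k = key[OF H]
    show "q l = (\<Sum>\<^sub>\<infinity> z \<in> (UNIV::int set). PY FY FE \<xi> \<zeta> z0 (l - z) *
             dbeta (Peps_plus FE \<xi> \<zeta> z0) l z)"
      by (rule suppP.main_infsum[OF conjunct1[OF k] q0 g0]) (use k in auto)
  qed
  have part2: "\<forall>s \<sigma> :: real.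
       s > 0 \<and> 0 < \<sigma> \<and> \<sigma> \<le> s \<and> (\<forall>l. \<xi> l = \<xi> 0 + s * real l) \<and> FE (z0 + \<sigma>) > 0 \<longrightarrow>
       (let \<zeta> = (\<lambda>l. \<xi> 0 + \<sigma> + s * real l) in
        \<forall>x :: real.
          distfun M X x =
          Theta_conv (PY FY FE \<xi> \<zeta> z0)
                     (sgamma (\<lambda>z. Peps_plus FE \<xi> \<zeta> z0 z z))
                     ((x - \<xi> 0) / s))"
  proof (intro allI impI)
    fix s \<sigma> :: real
    assume A: "s > 0 \<and> 0 < \<sigma> \<and> \<sigma> \<le> s \<and> (\<forall>l. \<xi> l = \<xi> 0 + s * real l) \<and> FE (z0 + \<sigma>) > 0"
    have s0: "s > 0" using A by blast
    have sig: "0 < \<sigma>" "\<sigma> \<le> s" using A by blast+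
    have Fs: "FE (z0 + \<sigma>) > 0" using A by blast
    define c where "c = \<xi> 0"
    have xi: "\<xi> l = c + s * real l" for l unfolding c_def using A by blast
    define \<zeta> where "\<zeta> = (\<lambda>l::nat. \<xi> 0 + \<sigma> + s * real l)"
    define P where "P = Peps_plus FE \<xi> \<zeta> z0"
    define g where "g = PY FY FE \<xi> \<zeta> z0"
    define U where "U z = P z z" for z
    have H: "\<forall>l. \<xi> l < \<zeta> l \<and> \<zeta> l \<le> \<xi> (Suc l) \<and> FE (z0 + \<zeta> l - \<xi> l) > 0"
    proof
      fix l
      have "z0 + \<zeta> l - \<xi> l = z0 + \<sigma>" unfolding \<zeta>_def by (simp add: xi)
      then show "\<xi> l < \<zeta> l \<and> \<zeta> l \<le> \<xi> (Suc l) \<and> FE (z0 + \<zeta> l - \<xi> l) > 0"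
        unfolding \<zeta>_def using sig Fs by (simp add: xi algebra_simps)
    qed
    note k = key[OF H]
    have sP: "suppP P" using k P_def by simp
    have rec: "\<And>l. 0 \<le> l \<Longrightarrow> q l = g l + (\<Sum>z1\<in>{1..l}. P l z1 * q (l - z1))"
      using k unfolding P_def g_def by blast
    have Pform: "P l z = kdelta z - FE (z0 + \<sigma> + s * of_int z) / FE (z0 + \<sigma>)"
      if "0 \<le> z" "z \<le> l" for l z
    proof -
      have e1: "z0 + \<zeta> (nat l) - \<xi> (nat (l - z)) = z0 + \<sigma> + s * of_int z"
        unfolding \<zeta>_def using that by (simp add: xi algebra_simps)
      have e2: "z0 + \<zeta> (nat l) - \<xi> (nat l) = z0 + \<sigma>"
        unfolding \<zeta>_def by (simp add: xi)
      show ?thesis using that unfolding P_def Peps_plus_def e1 e2 by simp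
    qed
    have PU: "P l z = U z" if "0 \<le> z" "z \<le> l" for l z
      using that Pform[of z l] Pform[of z z] unfolding U_def by simp
    have U0: "U z = 0" if "z \<le> 0" for z
    proof (rule ccontr)
      assume "U z \<noteq> 0"
      then have "1 \<le> z" using suppP.supp[OF sP, of z z] unfolding U_def by blast
      then show False using that by simp
    qed
    show "let \<zeta> = (\<lambda>l. \<xi> 0 + \<sigma> + s * real l) in
        \<forall>x :: real. distfun M X x = Theta_conv (PY FY FE \<xi> \<zeta> z0)
                     (sgamma (\<lambda>z. Peps_plus FE \<xi> \<zeta> z0 z z)) ((x - \<xi> 0) / s)"
      unfolding Let_def \<zeta>_def[symmetric] g_def[symmetric] P_def[symmetric] U_def[symmetric, abs_def]
    proof
      fix x :: real
      define n where "n = \<lfloor>(x - \<xi> 0) / s\<rfloor>"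
      define K where "K = {k::nat. int k \<le> n}"
      have Kfin: "finite K" unfolding K_def
        by (rule finite_subset[of _ "{..nat n}"]) auto
      have Kiff: "\<xi> k \<le> x \<longleftrightarrow> k \<in> K" for k
      proof -
        have "\<xi> k \<le> x \<longleftrightarrow> real k \<le> (x - \<xi> 0) / s"
          using s0 by (simp add: xi field_simps)
        also have "\<dots> \<longleftrightarrow> int k \<le> n" unfolding n_def by (simp add: le_floor_iff)
        finally show ?thesis unfolding K_def by simp
      qed
      have "distfun M X x = (\<Sum>k\<in>K. pX k)"
        unfolding distfun_eq[OF Xm] pX_eq by (rule FX_decomp[OF Xm rng Kfin Kiff mono])
      also have "\<dots> = (\<Sum>k\<in>{0..n}. q k)"
        by (rule sum.reindex_bij_witness[of _ nat int]) (auto simp: K_def q_def)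
      also have "\<dots> = (\<Sum>k\<in>{0..n}. \<Sum>z\<in>{0..k}. g (k - z) * sgamma U z)"
      proof (rule sum.cong[OF refl])
        fix k assume "k \<in> {0..n}"
        have "q k = (\<Sum>z\<in>{0..k}. g (k - z) * dbeta P k z)"
          by (rule suppP.main_rec[OF sP q0]) (auto simp: g_def g0 rec)
        also have "\<dots> = (\<Sum>z\<in>{0..k}. g (k - z) * sgamma U z)"
        proof (rule sum.cong[OF refl])
          fix z assume "z \<in> {0..k}"
          then show "g (k - z) * dbeta P k z = g (k - z) * sgamma U z"
            using suppP.gamma_eq[OF sP PU U0, of z k] by simp
        qed
        finally show "q k = (\<Sum>z\<in>{0..k}. g (k - z) * sgamma U z)" .
      qed
      also have "\<dots> = Theta_conv g (sgamma U) ((x - \<xi> 0) / s)"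
        unfolding n_def by (rule Theta_conv_eq[symmetric]) (auto simp: g_def g0 sgamma_neg)
      finally show "distfun M X x = Theta_conv g (sgamma U) ((x - \<xi> 0) / s)" .
    qed
  qed
  have qq: "q l = (if 0 \<le> l then distatom M X (\<xi> (nat l)) else 0)" for l
    unfolding q_def pX_def by simp
  show ?thesis unfolding qq[symmetric] FE_def[symmetric] FY_def[symmetric]
    by (rule conjI[OF part1 part2])
qed

end
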